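(* Fix $1<p<\infty$. Let $\Omega$ be a probability space and let $D_Y,D_X,E_Y,E_X:\Omega\to\mathbb{R}$, $\lambda,\Theta>0$, and $a,b,\nu,\mu\in(0,1)$ be such that (i) $D_Y,D_X,E_Y,E_X$ are non-negative measurable functions with $D_Y\le E_Y$, $D_X\le E_X$, $D_Y\le\lambda^pD_X$, $E_Y\le\lambda^pE_X$, $D_Y\le(1+\nu)\Theta^pE_X$; (ii) $\mathbb{E}D_Y>(1-\nu)\Theta^p\mathbb{E}E_X$, $\mathbb{E}D_Y>(1-\mu)\mathbb{E}E_Y$, $\mathbb{E}D_X>(1-\mu)\mathbb{E}E_X$; (iii) $\lambda^p\bigl(\frac{2\mu}{a}+\frac{2\nu}{b}\bigr)<\Theta^p(1-\nu)$. Then there exists $\omega\in\Omega$ such that $D_Y(\omega)>(1-a)E_Y(\omega)$, $D_X(\omega)>(1-a)E_X(\omega)$, and $D_Y(\omega)>(1-b)\Theta^pE_X(\omega)$.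
   Context: $\mathbb{E}$ denotes expectation on the probability space $\Omega$. *)

theory Defs
  imports "HOL-Probability.Probability"
begin

end

theory Submission
  imports Defs
begin

lemma hA: "\<not> (x::ennreal) < \<infinity> \<Longrightarrow> x = top" by (simp add: less_top[symmetric])
lemma hB: "(c::real) > 0 \<Longrightarrow> (x::ennreal) = top \<Longrightarrow> ennreal c * x < y \<Longrightarrow> False"
  by (simp add: ennreal_mult_top)

theorem lemma3p2:
  fixes M :: "'a measure"
    and D_Y D_X E_Y E_X :: "'a \<Rightarrow> real"
    and p lam Th a b \<nu> \<mu> :: real
  assumes "prob_space M"
    and "1 < p"
    and "lam > 0" and "Th > 0"
    and "0 < a" "a < 1" "0 < b" "b < 1" "0 < \<nu>" "\<nu> < 1" "0 < \<mu>" "\<mu> < 1"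
    and "D_Y \<in> borel_measurable M" "D_X \<in> borel_measurable M"
        "E_Y \<in> borel_measurable M" "E_X \<in> borel_measurable M"
    and "\<And>w. w \<in> space M \<Longrightarrow> 0 \<le> D_Y w"
        "\<And>w. w \<in> space M \<Longrightarrow> 0 \<le> D_X w"
        "\<And>w. w \<in> space M \<Longrightarrow> 0 \<le> E_Y w"
        "\<And>w. w \<in> space M \<Longrightarrow> 0 \<le> E_X w"
    and "\<And>w. w \<in> space M \<Longrightarrow> D_Y w \<le> E_Y w"
        "\<And>w. w \<in> space M \<Longrightarrow> D_X w \<le> E_X w"
        "\<And>w. w \<in> space M \<Longrightarrow> D_Y w \<le> lam powr p * D_X w"
        "\<And>w. w \<in> space M \<Longrightarrow> E_Y w \<le> lam powr p * E_X w"
        "\<And>w. w \<in> space M \<Longrightarrow> D_Y w \<le> (1 + \<nu>) * Th powr p * E_X w"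
    and "(\<integral>\<^sup>+ w. ennreal (D_Y w) \<partial>M) > ennreal ((1 - \<nu>) * Th powr p) * (\<integral>\<^sup>+ w. ennreal (E_X w) \<partial>M)"
        "(\<integral>\<^sup>+ w. ennreal (D_Y w) \<partial>M) > ennreal (1 - \<mu>) * (\<integral>\<^sup>+ w. ennreal (E_Y w) \<partial>M)"
        "(\<integral>\<^sup>+ w. ennreal (D_X w) \<partial>M) > ennreal (1 - \<mu>) * (\<integral>\<^sup>+ w. ennreal (E_X w) \<partial>M)"
    and "lam powr p * (2 * \<mu> / a + 2 * \<nu> / b) < Th powr p * (1 - \<nu>)"
  shows "\<exists>w\<in>space M. D_Y w > (1 - a) * E_Y w \<and> D_X w > (1 - a) * E_X w
              \<and> D_Y w > (1 - b) * Th powr p * E_X w"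
proof (rule ccontr)
  assume neg: "\<not> ?thesis"
  interpret P: prob_space M by fact
  define L where "L = lam powr p"
  define T where "T = Th powr p"
  have L0: "L > 0" unfolding L_def using assms(3) by simp
  have T0: "T > 0" unfolding T_def using assms(4) by simp
  have ex_fin: "(\<integral>\<^sup>+ w. ennreal (E_X w) \<partial>M) < \<infinity>"
  proof (rule ccontr)
    assume "\<not> ?thesis"
    hence inf: "(\<integral>\<^sup>+ w. ennreal (E_X w) \<partial>M) = top" by (rule hA)
    have pos: "(1 - \<nu>) * Th powr p > 0" using assms(4) assms(10) by simp
    show False by (rule hB[OF pos inf assms(26)])
  qed
  have iEX: "integrable M E_X"
    by (rule integrableI_nonneg[OF assms(16) AE_I2[OF assms(20)] ex_fin])
  have iLEX: "integrable M (\<lambda>w. (1 + L + (1+\<nu>)*T) * E_X w)" using iEX by simp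
  have bnd: "integrable M g" if "g \<in> borel_measurable M" "\<And>w. w \<in> space M \<Longrightarrow> 0 \<le> g w"
     "\<And>w. w \<in> space M \<Longrightarrow> g w \<le> (1 + L + (1+\<nu>)*T) * E_X w" for g
    apply (rule Bochner_Integration.integrable_bound[OF iLEX that(1)])
    using that assms(20) L0 T0 assms(9) by (auto intro!: AE_I2 simp: abs_of_nonneg)
  have iDY: "integrable M D_Y"
  proof (rule bnd[OF assms(13) assms(17)])
    fix w assume w: "w \<in> space M"
      have "0 \<le> (1 + L) * E_X w" using L0 assms(20)[OF w] by simp
      hence "(1+\<nu>)*T*E_X w \<le> (1 + L + (1+\<nu>)*T) * E_X w" by (simp add: distrib_right)
      then show "D_Y w \<le> (1 + L + (1+\<nu>)*T) * E_X w" using assms(25)[OF w] unfolding T_def by linarith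
  qed
  have iEY: "integrable M E_Y"
  proof (rule bnd[OF assms(15) assms(19)])
    fix w assume w: "w \<in> space M"
      have "0 \<le> (1 + (1+\<nu>)*T) * E_X w" using T0 assms(9) assms(20)[OF w] by simp
      hence "L*E_X w \<le> (1 + L + (1+\<nu>)*T) * E_X w" by (simp add: distrib_right)
      then show "E_Y w \<le> (1 + L + (1+\<nu>)*T) * E_X w" using assms(24)[OF w] unfolding L_def by linarith
  qed
  have iDX: "integrable M D_X"
  proof (rule bnd[OF assms(14) assms(18)])
    fix w assume w: "w \<in> space M"
      have "0 \<le> L + (1+\<nu>)*T" using L0 T0 assms(9) by simp
      hence "0 \<le> (L + (1+\<nu>)*T) * E_X w" using assms(20)[OF w] by simp
      hence "E_X w \<le> (1 + L + (1+\<nu>)*T) * E_X w" by (simp add: distrib_right)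
      then show "D_X w \<le> (1 + L + (1+\<nu>)*T) * E_X w" using assms(22)[OF w] by linarith
  qed
  define dy where "dy = integral\<^sup>L M D_Y"
  define dx where "dx = integral\<^sup>L M D_X"
  define ey where "ey = integral\<^sup>L M E_Y"
  define ex where "ex = integral\<^sup>L M E_X"
  have cv: "(\<integral>\<^sup>+ w. ennreal (f w) \<partial>M) = ennreal (integral\<^sup>L M f)"
    if "integrable M f" "\<And>w. w \<in> space M \<Longrightarrow> 0 \<le> f w" for f
    by (rule nn_integral_eq_integral) (use that in auto)
  have ex0: "ex \<ge> 0" unfolding ex_def using assms(20) by (simp add: integral_nonneg)
  have ey0: "ey \<ge> 0" unfolding ey_def using assms(19) by (simp add: integral_nonneg)
  have h1: "dy > (1 - \<nu>) * T * ex"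
  proof -
    have "ennreal ((1 - \<nu>) * T * ex) < ennreal dy"
      using assms(26) cv[OF iDY assms(17)] cv[OF iEX assms(20)] assms(10) T0 ex0
      unfolding dy_def ex_def T_def by (simp add: ennreal_mult'[symmetric])
    moreover have "0 \<le> (1 - \<nu>) * T * ex" using T0 assms(10) ex0 by simp
    ultimately show ?thesis using ennreal_less_iff[of "(1 - \<nu>) * T * ex" dy] by simp
  qed
  have h2: "dy > (1 - \<mu>) * ey"
  proof -
    have "ennreal ((1 - \<mu>) * ey) < ennreal dy"
      using assms(27) cv[OF iDY assms(17)] cv[OF iEY assms(19)] assms(12) ey0
      unfolding dy_def ey_def by (simp add: ennreal_mult'[symmetric])
    moreover have "0 \<le> (1 - \<mu>) * ey" using assms(12) ey0 by simp
    ultimately show ?thesis using ennreal_less_iff[of "(1 - \<mu>) * ey" dy] by simp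
  qed
  have h3: "dx > (1 - \<mu>) * ex"
  proof -
    have "ennreal ((1 - \<mu>) * ex) < ennreal dx"
      using assms(28) cv[OF iDX assms(18)] cv[OF iEX assms(20)] assms(12) ex0
      unfolding dx_def ex_def by (simp add: ennreal_mult'[symmetric])
    moreover have "0 \<le> (1 - \<mu>) * ex" using assms(12) ex0 by simp
    ultimately show ?thesis using ennreal_less_iff[of "(1 - \<mu>) * ex" dx] by simp
  qed
  have h4: "ey \<le> L * ex" unfolding ey_def ex_def L_def
    using integral_mono[OF iEY _ assms(24)] iEX by simp
  have pw: "D_Y w \<le> (1/a) * (E_Y w - D_Y w) + (L/a) * (E_X w - D_X w)
        + (L/(b*T)) * ((1+\<nu>)*T*E_X w - D_Y w)" if w: "w \<in> space M" for w
  proof -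
    have a1: "(1/a) * (E_Y w - D_Y w) \<ge> 0" using assms(21)[OF w] assms(5) by simp
    have a2: "(L/a) * (E_X w - D_X w) \<ge> 0" using assms(22)[OF w] assms(5) L0 by simp
    have a3: "(L/(b*T)) * ((1+\<nu>)*T*E_X w - D_Y w) \<ge> 0" using assms(25)[OF w] assms(7) L0 T0
      unfolding T_def by simp
    have LE: "D_Y w \<le> L * E_X w"
    proof -
      have "L * D_X w \<le> L * E_X w" using assms(22)[OF w] L0 by simp
      thus ?thesis using assms(23)[OF w] unfolding L_def by linarith
    qed
    consider "D_Y w \<le> (1 - a) * E_Y w" | "D_X w \<le> (1 - a) * E_X w" | "D_Y w \<le> (1 - b) * T * E_X w"
      using neg w unfolding T_def by force
    thus ?thesis
    proof cases
      case 1
      have "D_Y w \<le> (1/a) * (E_Y w - D_Y w)"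
      proof -
        have "a * D_Y w \<le> a * E_Y w" using assms(21)[OF w] assms(5) by simp
        also have "... \<le> E_Y w - D_Y w" using 1 by (simp add: algebra_simps)
        finally have "a * D_Y w \<le> E_Y w - D_Y w" .
        thus ?thesis using assms(5) by (simp add: field_simps)
      qed
      thus ?thesis using a2 a3 by linarith
    next
      case 2
      have "L * E_X w \<le> (L/a) * (E_X w - D_X w)"
      proof -
        have "a * E_X w \<le> E_X w - D_X w" using 2 by (simp add: algebra_simps)
        hence "L * (a * E_X w) \<le> L * (E_X w - D_X w)" using L0 by simp
        thus ?thesis using assms(5) by (simp add: field_simps)
      qed
      thus ?thesis using a1 a3 LE by linarith
    next
      case 3
      have "L * E_X w \<le> (L/(b*T)) * ((1+\<nu>)*T*E_X w - D_Y w)"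
      proof -
        have "b * T * E_X w \<le> (1+\<nu>)*T*E_X w - D_Y w"
        proof -
          have "0 \<le> \<nu> * T * E_X w" using assms(20)[OF w] assms(9) T0 by simp
          thus ?thesis using 3 by (simp add: algebra_simps)
        qed
        hence "L * (b * T * E_X w) \<le> L * ((1+\<nu>)*T*E_X w - D_Y w)" using L0 by simp
        thus ?thesis using assms(7) T0 by (simp add: field_simps)
      qed
      thus ?thesis using a1 a2 LE by linarith
    qed
  qed
  have "dy \<le> (1/a) * (ey - dy) + (L/a) * (ex - dx) + (L/(b*T)) * ((1+\<nu>)*T*ex - dy)"
  proof -
    have "dy \<le> integral\<^sup>L M (\<lambda>w. (1/a) * (E_Y w - D_Y w) + (L/a) * (E_X w - D_X w)
        + (L/(b*T)) * ((1+\<nu>)*T*E_X w - D_Y w))"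
      unfolding dy_def by (rule integral_mono) (use iDY iEY iEX iDX pw in auto)
    also have "... = (1/a) * (ey - dy) + (L/a) * (ex - dx) + (L/(b*T)) * ((1+\<nu>)*T*ex - dy)"
      unfolding dy_def ey_def ex_def dx_def using iDY iEY iEX iDX by simp
    finally show ?thesis .
  qed
  moreover have "(1/a) * (ey - dy) < (\<mu>/a) * ey"
  proof -
    have "ey - dy < \<mu> * ey" using h2 by (simp add: algebra_simps)
    hence "(ey - dy) / a < (\<mu> * ey) / a" using assms(5) by (rule divide_strict_right_mono)
    thus ?thesis by simp
  qed
  moreover have "(L/a) * (ex - dx) \<le> (L*\<mu>/a) * ex"
  proof -
    have "ex - dx \<le> \<mu> * ex" using h3 by (simp add: algebra_simps)
    hence "L * (ex - dx) \<le> L * (\<mu> * ex)" using L0 by simp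
    hence "(L * (ex - dx)) / a \<le> (L * (\<mu> * ex)) / a" using assms(5) by (intro divide_right_mono) auto
    thus ?thesis by simp
  qed
  moreover have "(L/(b*T)) * ((1+\<nu>)*T*ex - dy) \<le> (L/(b*T)) * (2*\<nu>*T*ex)"
  proof -
    have "(1+\<nu>)*T*ex - dy \<le> 2*\<nu>*T*ex" using h1 by (simp add: algebra_simps)
    thus ?thesis using L0 T0 assms(7) by (intro mult_left_mono) auto
  qed
  moreover have "(\<mu>/a) * ey \<le> (\<mu>/a) * (L * ex)" using h4 assms(5,11) by (intro mult_left_mono) auto
  moreover have "(\<mu>/a) * (L * ex) + (L*\<mu>/a) * ex + (L/(b*T)) * (2*\<nu>*T*ex)
      = L * (2*\<mu>/a + 2*\<nu>/b) * ex" using T0 assms(7) by (simp add: field_simps)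
  moreover have "L * (2*\<mu>/a + 2*\<nu>/b) * ex \<le> T * (1 - \<nu>) * ex"
    using assms(29) ex0 unfolding L_def T_def by (intro mult_right_mono) auto
  moreover have "T * (1 - \<nu>) * ex < dy" using h1 by (simp add: algebra_simps)
  ultimately show False by linarith
qed

end
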